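(* Let $(X,\nu)$ be a measure space, $0<p<p_1<\infty$ and $0<q<\infty$. Let $f\in L_{p,q}$ and let $(g_j)$ be a sequence in $L_{p,q}$ such that $\limsup_{j\to\infty}\|g_j\|_{L_{p,q}}\leqslant A$ and $\lim_{j\to\infty}\|g_j\|_{L_{p_1}}=0$. Then $\limsup_{j\to\infty}\|f+g_j\|^q_{L_{p,q}}\leqslant\|f\|^q_{L_{p,q}}+A^q$.
   Context: $\|f\|^q_{L_{p,q}}=q\int_0^\infty(m_f(t)t^p)^{q/p}\frac{dt}{t}$ with $m_f(t)=\nu(\{x:|f(x)|\geqslant t\})$. *)

theory Defs
  imports "HOL-Analysis.Analysis"
begin

text \<open>Real power of an extended nonnegative real, for exponents a > 0:
  infinity to a positive power is infinity.\<close>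
definition epowr :: "ennreal \<Rightarrow> real \<Rightarrow> ennreal" where
  "epowr x a = (if x = \<infinity> then \<infinity> else ennreal (enn2real x powr a))"

definition distfun :: "'a measure \<Rightarrow> ('a \<Rightarrow> real) \<Rightarrow> real \<Rightarrow> ennreal" where
  "distfun M f t = emeasure M {x \<in> space M. t \<le> \<bar>f x\<bar>}"

definition lorentz_pow :: "'a measure \<Rightarrow> real \<Rightarrow> real \<Rightarrow> ('a \<Rightarrow> real) \<Rightarrow> ennreal" where
  "lorentz_pow M p q f =
     ennreal q * (\<integral>\<^sup>+ t \<in> {0<..}. epowr (distfun M f t * ennreal (t powr p)) (q / p) * ennreal (1 / t) \<partial>lborel)"

definition lorentz_norm :: "'a measure \<Rightarrow> real \<Rightarrow> real \<Rightarrow> ('a \<Rightarrow> real) \<Rightarrow> ennreal" where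
  "lorentz_norm M p q f = epowr (lorentz_pow M p q f) (1 / q)"

definition in_Lorentz :: "'a measure \<Rightarrow> real \<Rightarrow> real \<Rightarrow> ('a \<Rightarrow> real) \<Rightarrow> bool" where
  "in_Lorentz M p q f \<longleftrightarrow> f \<in> borel_measurable M \<and> lorentz_pow M p q f < \<infinity>"

definition lp_norm :: "'a measure \<Rightarrow> real \<Rightarrow> ('a \<Rightarrow> real) \<Rightarrow> ennreal" where
  "lp_norm M p g = epowr (\<integral>\<^sup>+ x. ennreal (\<bar>g x\<bar> powr p) \<partial>M) (1 / p)"

end

theory Submission
  imports Defs
begin


lemma epowr_ennreal: "0 \<le> x \<Longrightarrow> epowr (ennreal x) a = ennreal (x powr a)"
  by (simp add: epowr_def)

lemma epowr_zero[simp]: "epowr 0 a = 0"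
  by (simp add: epowr_def)

lemma epowr_top[simp]: "epowr top a = top"
  by (simp add: epowr_def)

lemma epowr_mono:
  assumes "0 < a" "x \<le> y" shows "epowr x a \<le> epowr y a"
proof (cases "y = \<infinity>")
  case True then show ?thesis by (simp add: epowr_def)
next
  case False
  then have "x \<noteq> \<infinity>" using assms(2) top.extremum_unique by fastforce
  then show ?thesis using False assms
    by (auto simp: epowr_def less_top intro!: ennreal_leI powr_mono2 enn2real_mono)
qed

lemma epowr_measurable[measurable]: "(\<lambda>x. epowr x a) \<in> borel_measurable borel"
  unfolding epowr_def by measurable

lemma antimono_borel:
  fixes \<phi> :: "real \<Rightarrow> ennreal"
  assumes "\<And>s t. s \<le> t \<Longrightarrow> \<phi> t \<le> \<phi> s"
  shows "\<phi> \<in> borel_measurable borel"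
proof (rule borel_measurableI_greater)
  fix y
  have "is_interval {x. y < \<phi> x}"
    unfolding is_interval_1 using assms by (auto intro: less_le_trans)
  then show "{x \<in> space borel. y < \<phi> x} \<in> sets borel"
    using real_interval_borel_measurable by simp
qed

lemma epowr_eq_0_iff:
  assumes "0 < a" shows "epowr y a = 0 \<longleftrightarrow> y = 0"
  using assms by (cases y) (auto simp: epowr_def)

lemma epowr_mult:
  assumes "0 < a" shows "epowr (x * y) a = epowr x a * epowr y a"
proof (cases "x = \<infinity> \<or> y = \<infinity>")
  case True
  then show ?thesis using assms
    by (cases "x = 0"; cases "y = 0") (auto simp: ennreal_mult_top ennreal_top_mult epowr_eq_0_iff)
next
  case False
  then show ?thesis using assms
    by (auto simp: epowr_def enn2real_mult powr_mult ennreal_mult ennreal_mult_eq_top_iff)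
qed

lemma real_powr_add_le:
  fixes u v a e :: real
  assumes "0 \<le> u" "0 \<le> v" "0 < a" "0 < e"
  shows "(u + v) powr a \<le> (1 + e) powr a * u powr a + (1 + 1/e) powr a * v powr a"
proof (cases "v \<le> e * u")
  case True
  then have "(u + v) powr a \<le> ((1 + e) * u) powr a"
    using assms by (intro powr_mono2) (auto simp: algebra_simps)
  also have "\<dots> = (1 + e) powr a * u powr a" using assms by (simp add: powr_mult)
  finally show ?thesis using assms by (smt (verit) mult_nonneg_nonneg powr_ge_zero)
next
  case False
  then have "u \<le> v / e" using assms by (simp add: field_simps)
  then have "(u + v) powr a \<le> ((1 + 1/e) * v) powr a"
    using assms by (intro powr_mono2) (auto simp: algebra_simps)
  also have "\<dots> = (1 + 1/e) powr a * v powr a" using assms by (simp add: powr_mult)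
  finally show ?thesis using assms by (smt (verit) mult_nonneg_nonneg powr_ge_zero)
qed

lemma epowr_add_le:
  assumes "0 < a" "0 < e"
  shows "epowr (x + y) a \<le> ennreal ((1 + e) powr a) * epowr x a + ennreal ((1 + 1/e) powr a) * epowr y a"
proof (cases "x = \<infinity> \<or> y = \<infinity>")
  case True
  have "1 + 1/e > 0" using assms by (simp add: add_pos_pos)
  then have p1: "(1 + e) powr a > 0" "(1 + 1/e) powr a > 0" using assms by auto
  note T = True
  have l: "epowr (x + y) a = top" using True by auto
  show ?thesis
  proof (cases "x = top")
    case True
    then have "ennreal ((1 + e) powr a) * epowr x a = top" using p1 by simp
    then show ?thesis using l by simp
  next
    case False
    then have "y = top" using T by simp
    then have "ennreal ((1 + 1/e) powr a) * epowr y a = top" using p1 by simp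
    then show ?thesis using l by simp
  qed
next
  case False
  then obtain u v where uv: "x = ennreal u" "y = ennreal v" "0 \<le> u" "0 \<le> v"
    by (cases x; cases y) auto
  have "epowr (x + y) a = ennreal ((u + v) powr a)"
    using uv by (simp add: epowr_ennreal flip: ennreal_plus)
  also have "\<dots> \<le> ennreal ((1 + e) powr a * u powr a + (1 + 1/e) powr a * v powr a)"
    using real_powr_add_le[OF uv(3,4) assms] by (rule ennreal_leI)
  also have "\<dots> = ennreal ((1 + e) powr a) * epowr x a + ennreal ((1 + 1/e) powr a) * epowr y a"
    using uv assms by (simp add: epowr_ennreal ennreal_mult ennreal_plus)
  finally show ?thesis .
qed

lemma epowr_epowr:
  assumes "0 < a" "0 < b" shows "epowr (epowr x a) b = epowr x (a * b)"
  using assms by (auto simp: epowr_def powr_powr)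

lemma epowr_one[simp]: "epowr x 1 = x"
  by (cases x) (auto simp: epowr_def)

lemma epowr_tendsto_0:
  fixes F :: "'b filter"
  assumes "(u \<longlongrightarrow> 0) F" "0 < a"
  shows "((\<lambda>j. epowr (u j) a) \<longlongrightarrow> 0) F"
proof -
  have ev: "eventually (\<lambda>j. u j < 1) F"
    using assms(1) by (rule order_tendstoD) simp
  have "((\<lambda>j. enn2real (u j)) \<longlongrightarrow> enn2real 0) F"
    using assms(1) by (intro tendsto_enn2real) auto
  then have "((\<lambda>j. enn2real (u j) powr a) \<longlongrightarrow> 0) F"
    using assms(2) by (intro tendsto_zero_powrI) auto
  then have "((\<lambda>j. ennreal (enn2real (u j) powr a)) \<longlongrightarrow> ennreal (0 powr a)) F"
    by (intro tendsto_ennrealI) simp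
  then have "((\<lambda>j. ennreal (enn2real (u j) powr a)) \<longlongrightarrow> 0) F" by simp
  moreover have "eventually (\<lambda>j. ennreal (enn2real (u j) powr a) = epowr (u j) a) F"
    using ev by eventually_elim (auto simp: epowr_def)
  ultimately show ?thesis by (rule Lim_transform_eventually)
qed

lemma distfun_antimono:
  assumes [measurable]: "h \<in> borel_measurable M" and "s \<le> t"
  shows "distfun M h t \<le> distfun M h s"
  unfolding distfun_def using assms(2) by (intro emeasure_mono) auto

lemma distfun_measurable[measurable]:
  assumes "h \<in> borel_measurable M"
  shows "distfun M h \<in> borel_measurable borel"
  by (rule antimono_borel) (rule distfun_antimono[OF assms])

lemma distfun_add_le:
  assumes [measurable]: "f \<in> borel_measurable M" "g \<in> borel_measurable M"
    and "0 \<le> l" "0 \<le> m" "l + m = 1"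
  shows "distfun M (\<lambda>x. f x + g x) t \<le> distfun M f (l * t) + distfun M g (m * t)"
proof -
  have "{x \<in> space M. t \<le> \<bar>f x + g x\<bar>} \<subseteq> {x \<in> space M. l * t \<le> \<bar>f x\<bar>} \<union> {x \<in> space M. m * t \<le> \<bar>g x\<bar>}"
  proof safe
    fix x assume "x \<in> space M" "t \<le> \<bar>f x + g x\<bar>" "\<not> m * t \<le> \<bar>g x\<bar>"
    then have "\<bar>f x\<bar> + \<bar>g x\<bar> \<ge> t" "\<bar>g x\<bar> < m * t" by auto
    moreover have "l * t = t - m * t" using assms(5) by (simp add: algebra_simps flip: distrib_right)
    ultimately show "l * t \<le> \<bar>f x\<bar>" by linarith
  qed
  then have "distfun M (\<lambda>x. f x + g x) t \<le> emeasure M ({x \<in> space M. l * t \<le> \<bar>f x\<bar>} \<union> {x \<in> space M. m * t \<le> \<bar>g x\<bar>})"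
    unfolding distfun_def by (intro emeasure_mono) auto
  also have "\<dots> \<le> distfun M f (l * t) + distfun M g (m * t)"
    unfolding distfun_def by (intro emeasure_subadditive) auto
  finally show ?thesis .
qed

lemma distfun_cheb:
  assumes [measurable]: "g \<in> borel_measurable M" and "0 < s" "0 < P"
  shows "distfun M g s \<le> ennreal (s powr (- P)) * (\<integral>\<^sup>+x. ennreal (\<bar>g x\<bar> powr P) \<partial>M)"
proof -
  have "ennreal (s powr P) * distfun M g s = (\<integral>\<^sup>+x. ennreal (s powr P) * indicator {x \<in> space M. s \<le> \<bar>g x\<bar>} x \<partial>M)"
    unfolding distfun_def by (subst nn_integral_cmult_indicator) auto
  also have "\<dots> \<le> (\<integral>\<^sup>+x. ennreal (\<bar>g x\<bar> powr P) \<partial>M)"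
    using assms by (intro nn_integral_mono) (auto simp: indicator_def intro!: ennreal_leI powr_mono2)
  finally have *: "ennreal (s powr P) * distfun M g s \<le> (\<integral>\<^sup>+x. ennreal (\<bar>g x\<bar> powr P) \<partial>M)" .
  have "distfun M g s = ennreal (s powr (- P)) * (ennreal (s powr P) * distfun M g s)"
    using assms by (simp add: mult.assoc[symmetric] powr_minus flip: ennreal_mult)
  also have "\<dots> \<le> ennreal (s powr (- P)) * (\<integral>\<^sup>+x. ennreal (\<bar>g x\<bar> powr P) \<partial>M)"
    by (intro mult_left_mono *) auto
  finally show ?thesis .
qed


lemma scale_subst:
  fixes G :: "real \<Rightarrow> ennreal"
  assumes [measurable]: "G \<in> borel_measurable borel" and c: "0 < c"
  shows "(\<integral>\<^sup>+t. G (c * t) * ennreal (1 / t) * indicator {0<..} t \<partial>lborel)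
       = (\<integral>\<^sup>+s. G s * ennreal (1 / s) * indicator {0<..} s \<partial>lborel)"
proof -
  define H where "H s = G s * ennreal (1 / s) * indicator {0<..} s" for s
  have [measurable]: "H \<in> borel_measurable borel" unfolding H_def by measurable
  have "(\<integral>\<^sup>+s. H s \<partial>lborel) = \<bar>c\<bar> * (\<integral>\<^sup>+x. H (0 + c * x) \<partial>lborel)"
    using c by (intro nn_integral_real_affine) auto
  also have "(\<lambda>x. H (0 + c * x)) = (\<lambda>x. (G (c * x) * ennreal (1 / x) * indicator {0<..} x) * ennreal (1 / c))"
  proof -
    have e: "ennreal (1 / (x * c)) = ennreal (1 / x) * ennreal (1 / c)" if "0 < x" for x
      using c that by (subst ennreal_mult[symmetric]) (auto simp: field_simps)
    show ?thesis using c by (auto simp: H_def fun_eq_iff indicator_def zero_less_mult_iff e mult_ac)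
  qed
  also have "(\<integral>\<^sup>+x. (G (c * x) * ennreal (1 / x) * indicator {0<..} x) * ennreal (1 / c) \<partial>lborel)
      = (\<integral>\<^sup>+x. G (c * x) * ennreal (1 / x) * indicator {0<..} x \<partial>lborel) * ennreal (1 / c)"
    by (intro nn_integral_multc) measurable
  also have "\<bar>c\<bar> * (\<dots>) = (\<integral>\<^sup>+x. G (c * x) * ennreal (1 / x) * indicator {0<..} x \<partial>lborel) * (ennreal c * ennreal (1 / c))"
    using c by (simp add: mult_ac)
  also have "ennreal c * ennreal (1 / c) = 1"
    using c by (simp flip: ennreal_mult)
  finally show ?thesis by (simp add: H_def)
qed

lemma tail_integral_finite:
  fixes e d :: real
  assumes "e < -1" "0 < d"
  shows "(\<integral>\<^sup>+t. ennreal (t powr e) * indicator {d..} t \<partial>lborel) < \<infinity>"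
proof -
  define F where "F t = (if t \<in> {d..} then t powr e else 0)" for t
  have "(F has_integral (-(d powr (e+1)) / (e+1))) UNIV"
    unfolding F_def has_integral_restrict_UNIV using has_integral_powr_to_inf[OF assms] .
  moreover have "F \<in> borel_measurable borel" unfolding F_def by measurable
  moreover have "\<And>t. 0 \<le> F t" by (auto simp: F_def)
  ultimately have "integral\<^sup>N lborel F = -(d powr (e+1)) / (e+1)"
    by (intro nn_integral_has_integral_lborel)
  moreover have "(\<lambda>t. ennreal (t powr e) * indicator {d..} t) = (\<lambda>t. ennreal (F t))"
    by (auto simp: F_def fun_eq_iff indicator_def)
  ultimately show ?thesis by simp
qed



lemma pointwise_bound:
  fixes f g :: "'a \<Rightarrow> real"
  assumes [measurable]: "f \<in> borel_measurable M" "g \<in> borel_measurable M"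
    and p: "0 < p" "p < p1" "0 < q" and e: "0 < \<epsilon>" "\<epsilon> < 1" and "0 < \<delta>" "0 < t"
  shows "epowr (distfun M (\<lambda>x. f x + g x) t * ennreal (t powr p)) (q/p)
    \<le> ennreal ((1+\<epsilon>) powr (q/p)) * (epowr (distfun M f ((1-\<epsilon>)*t) * ennreal (t powr p)) (q/p)
          + epowr (distfun M g ((1-\<epsilon>)*t) * ennreal (t powr p)) (q/p))
      + ennreal ((1+1/\<epsilon>) powr (q/p)) * (indicator {..<\<delta>} t * epowr (distfun M f (\<epsilon>*t) * ennreal (t powr p)) (q/p)
          + indicator {\<delta>..} t * (ennreal (\<epsilon> powr (-p1*(q/p)) * t powr ((p-p1)*(q/p)))
               * epowr (\<integral>\<^sup>+x. ennreal (\<bar>g x\<bar> powr p1) \<partial>M) (q/p)))"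
    (is "?L \<le> ?C1 * (?F1 + ?G1) + ?C2 * (?If * ?Fe + ?Ig * ?Ch)")
proof -
  define r where "r = q / p"
  have r: "0 < r" using p by (simp add: r_def)
  define I where "I = (\<integral>\<^sup>+x. ennreal (\<bar>g x\<bar> powr p1) \<partial>M)"
  define tp where "tp = ennreal (t powr p)"
  show ?thesis
  proof (cases "t < \<delta>")
    case True
    have "distfun M (\<lambda>x. f x + g x) t \<le> distfun M f (\<epsilon> * t) + distfun M g ((1-\<epsilon>) * t)"
      using e by (intro distfun_add_le) auto
    then have "distfun M (\<lambda>x. f x + g x) t * tp \<le> distfun M g ((1-\<epsilon>) * t) * tp + distfun M f (\<epsilon> * t) * tp"
      by (metis add.commute distrib_right mult_right_mono zero_le)
    then have "?L \<le> epowr (distfun M g ((1-\<epsilon>) * t) * tp + distfun M f (\<epsilon> * t) * tp) r"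
      unfolding r_def tp_def using r r_def by (intro epowr_mono) auto
    also have "\<dots> \<le> ?C1 * ?G1 + ?C2 * ?Fe"
      using epowr_add_le[OF r e(1)] unfolding r_def tp_def .
    also have "\<dots> \<le> ?C1 * (?F1 + ?G1) + ?C2 * (?If * ?Fe + ?Ig * ?Ch)"
      using True by (intro add_mono mult_left_mono) (auto simp: indicator_def)
    finally show ?thesis .
  next
    case False
    have "distfun M (\<lambda>x. f x + g x) t \<le> distfun M f ((1-\<epsilon>) * t) + distfun M g (\<epsilon> * t)"
      using e by (intro distfun_add_le) auto
    then have "distfun M (\<lambda>x. f x + g x) t * tp \<le> distfun M f ((1-\<epsilon>) * t) * tp + distfun M g (\<epsilon> * t) * tp"
      by (metis distrib_right mult_right_mono zero_le)
    then have "?L \<le> epowr (distfun M f ((1-\<epsilon>) * t) * tp + distfun M g (\<epsilon> * t) * tp) r"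
      unfolding r_def tp_def using r r_def by (intro epowr_mono) auto
    also have "\<dots> \<le> ?C1 * ?F1 + ?C2 * epowr (distfun M g (\<epsilon> * t) * tp) r"
      using epowr_add_le[OF r e(1)] unfolding r_def tp_def .
    also have "epowr (distfun M g (\<epsilon> * t) * tp) r \<le> ?Ch"
    proof -
      have et: "0 < \<epsilon> * t" using e assms by simp
      have "distfun M g (\<epsilon> * t) * tp \<le> ennreal ((\<epsilon> * t) powr (- p1)) * I * tp"
        unfolding I_def using distfun_cheb[OF assms(2) et, of p1] p
        by (intro mult_right_mono) auto
      also have "\<dots> = ennreal ((\<epsilon> * t) powr (- p1) * t powr p) * I"
        unfolding tp_def by (simp add: ennreal_mult mult_ac)
      finally have "epowr (distfun M g (\<epsilon> * t) * tp) r \<le> epowr (ennreal ((\<epsilon> * t) powr (- p1) * t powr p) * I) r"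
        using r by (intro epowr_mono) auto
      also have "\<dots> = ennreal (((\<epsilon> * t) powr (- p1) * t powr p) powr r) * epowr I r"
        using r by (simp add: epowr_mult epowr_ennreal)
      also have "((\<epsilon> * t) powr (- p1) * t powr p) powr r = \<epsilon> powr (-p1*r) * t powr ((p-p1)*r)"
        using e assms
        by (simp add: powr_mult powr_powr powr_add[symmetric] algebra_simps)
      finally show ?thesis unfolding r_def I_def .
    qed
    also have "?C1 * ?F1 + ?C2 * ?Ch \<le> ?C1 * (?F1 + ?G1) + ?C2 * (?If * ?Fe + ?Ig * ?Ch)"
      using False by (intro add_mono mult_left_mono) (auto simp: indicator_def)
    finally show ?thesis by (simp add: add_mono mult_left_mono)
  qed
qed



definition Tf :: "'a measure \<Rightarrow> real \<Rightarrow> real \<Rightarrow> ('a \<Rightarrow> real) \<Rightarrow> real \<Rightarrow> ennreal" where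
  "Tf M p q f u = (\<integral>\<^sup>+s. epowr (distfun M f s * ennreal (s powr p)) (q/p) * indicator {..<u} s * ennreal (1/s) * indicator {0<..} s \<partial>lborel)"

lemma scale_psi:
  fixes h :: "'a \<Rightarrow> real" and K :: "real \<Rightarrow> ennreal"
  assumes [measurable]: "h \<in> borel_measurable M" "K \<in> borel_measurable borel"
    and p: "0 < p" "0 < q" and c: "0 < c"
  shows "(\<integral>\<^sup>+t. epowr (distfun M h (c*t) * ennreal (t powr p)) (q/p) * K (c*t) * ennreal (1/t) * indicator {0<..} t \<partial>lborel)
    = ennreal (c powr (-q)) * (\<integral>\<^sup>+s. epowr (distfun M h s * ennreal (s powr p)) (q/p) * K s * ennreal (1/s) * indicator {0<..} s \<partial>lborel)"
proof -
  define G where "G s = epowr (distfun M h s * ennreal ((s/c) powr p)) (q/p) * K s" for s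
  have [measurable]: "G \<in> borel_measurable borel" unfolding G_def by measurable
  have "(\<integral>\<^sup>+t. epowr (distfun M h (c*t) * ennreal (t powr p)) (q/p) * K (c*t) * ennreal (1/t) * indicator {0<..} t \<partial>lborel)
      = (\<integral>\<^sup>+t. G (c * t) * ennreal (1 / t) * indicator {0<..} t \<partial>lborel)"
    using c by (simp add: G_def)
  also have "\<dots> = (\<integral>\<^sup>+s. G s * ennreal (1 / s) * indicator {0<..} s \<partial>lborel)"
    by (rule scale_subst) (use c in auto)
  also have "\<dots> = (\<integral>\<^sup>+s. ennreal (c powr (-q)) * (epowr (distfun M h s * ennreal (s powr p)) (q/p) * K s * ennreal (1/s) * indicator {0<..} s) \<partial>lborel)"
  proof (intro nn_integral_cong)
    fix s :: real
    show "G s * ennreal (1 / s) * indicator {0<..} s = ennreal (c powr (-q)) * (epowr (distfun M h s * ennreal (s powr p)) (q/p) * K s * ennreal (1/s) * indicator {0<..} s)"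
    proof (cases "0 < s")
      case True
      have "(s/c) powr p = s powr p * c powr (-p)"
        using True c by (simp add: powr_divide powr_minus_divide)
      then have "epowr (distfun M h s * ennreal ((s/c) powr p)) (q/p)
          = epowr (distfun M h s * ennreal (s powr p)) (q/p) * ennreal ((c powr (-p)) powr (q/p))"
        using p by (simp add: ennreal_mult mult.assoc epowr_mult epowr_ennreal)
      also have "(c powr (-p)) powr (q/p) = c powr (-q)"
        using p by (simp add: powr_powr)
      finally show ?thesis unfolding G_def by (simp add: mult_ac)
    qed simp
  qed
  also have "\<dots> = ennreal (c powr (-q)) * (\<integral>\<^sup>+s. epowr (distfun M h s * ennreal (s powr p)) (q/p) * K s * ennreal (1/s) * indicator {0<..} s \<partial>lborel)"
    by (rule nn_integral_cmult) measurable
  finally show ?thesis .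
qed

lemma scale_psi1:
  fixes h :: "'a \<Rightarrow> real"
  assumes [measurable]: "h \<in> borel_measurable M"
    and p: "0 < p" "0 < q" and c: "0 < c"
  shows "ennreal q * (\<integral>\<^sup>+t. epowr (distfun M h (c*t) * ennreal (t powr p)) (q/p) * ennreal (1/t) * indicator {0<..} t \<partial>lborel)
    = ennreal (c powr (-q)) * lorentz_pow M p q h"
  using scale_psi[OF assms(1) _ p c, of "\<lambda>_. 1"] unfolding lorentz_pow_def
  by (simp add: mult_ac)

lemma scale_psi2:
  fixes h :: "'a \<Rightarrow> real"
  assumes [measurable]: "h \<in> borel_measurable M"
    and p: "0 < p" "0 < q" and c: "0 < c"
  shows "(\<integral>\<^sup>+t. indicator {..<\<delta>} t * epowr (distfun M h (c*t) * ennreal (t powr p)) (q/p) * ennreal (1/t) * indicator {0<..} t \<partial>lborel)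
    = ennreal (c powr (-q)) * Tf M p q h (c * \<delta>)"
proof -
  have "(\<integral>\<^sup>+t. indicator {..<\<delta>} t * epowr (distfun M h (c*t) * ennreal (t powr p)) (q/p) * ennreal (1/t) * indicator {0<..} t \<partial>lborel)
     = (\<integral>\<^sup>+t. epowr (distfun M h (c*t) * ennreal (t powr p)) (q/p) * indicator {..<c*\<delta>} (c*t) * ennreal (1/t) * indicator {0<..} t \<partial>lborel)"
    using c by (intro nn_integral_cong) (auto simp: indicator_def)
  also have "\<dots> = ennreal (c powr (-q)) * Tf M p q h (c * \<delta>)"
    unfolding Tf_def by (rule scale_psi[OF assms(1) _ p c]) measurable
  finally show ?thesis .
qed



lemma main_estimate:
  fixes f g :: "'a \<Rightarrow> real"
  assumes [measurable]: "f \<in> borel_measurable M" "g \<in> borel_measurable M"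
    and p: "0 < p" "p < p1" "0 < q" and e: "0 < \<epsilon>" "\<epsilon> < 1" and d: "0 < \<delta>"
  shows "lorentz_pow M p q (\<lambda>x. f x + g x)
    \<le> ennreal ((1+\<epsilon>) powr (q/p)) * ennreal ((1-\<epsilon>) powr (-q)) * (lorentz_pow M p q f + lorentz_pow M p q g)
      + ennreal ((1+1/\<epsilon>) powr (q/p)) * ennreal q * ennreal (\<epsilon> powr (-q)) * Tf M p q f (\<epsilon> * \<delta>)
      + ennreal ((1+1/\<epsilon>) powr (q/p)) * ennreal q * ennreal (\<epsilon> powr (-p1*(q/p)))
         * (\<integral>\<^sup>+t. ennreal (t powr ((p-p1)*(q/p) - 1)) * indicator {\<delta>..} t \<partial>lborel)
         * epowr (\<integral>\<^sup>+x. ennreal (\<bar>g x\<bar> powr p1) \<partial>M) (q/p)"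
proof -
  define EI where "EI = epowr (\<integral>\<^sup>+x. ennreal (\<bar>g x\<bar> powr p1) \<partial>M) (q/p)"
  define C1 where "C1 = ennreal ((1+\<epsilon>) powr (q/p))"
  define C2 where "C2 = ennreal ((1+1/\<epsilon>) powr (q/p))"
  define Jd where "Jd = (\<integral>\<^sup>+t. ennreal (t powr ((p-p1)*(q/p) - 1)) * indicator {\<delta>..} t \<partial>lborel)"
  define X1 where "X1 t = epowr (distfun M f ((1-\<epsilon>)*t) * ennreal (t powr p)) (q/p) * ennreal (1/t) * indicator {0<..} t" for t
  define X2 where "X2 t = epowr (distfun M g ((1-\<epsilon>)*t) * ennreal (t powr p)) (q/p) * ennreal (1/t) * indicator {0<..} t" for t
  define X3 where "X3 t = indicator {..<\<delta>} t * epowr (distfun M f (\<epsilon>*t) * ennreal (t powr p)) (q/p) * ennreal (1/t) * indicator {0<..} t" for t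
  define X4 where "X4 t = indicator {\<delta>..} t * (ennreal (\<epsilon> powr (-p1*(q/p)) * t powr ((p-p1)*(q/p))) * EI) * ennreal (1/t) * indicator {0<..} t" for t
  have [measurable]: "X1 \<in> borel_measurable borel" "X2 \<in> borel_measurable borel"
    "X3 \<in> borel_measurable borel" "X4 \<in> borel_measurable borel"
    unfolding X1_def X2_def X3_def X4_def by measurable
  have pw: "epowr (distfun M (\<lambda>x. f x + g x) t * ennreal (t powr p)) (q/p) * ennreal (1/t) * indicator {0<..} t
      \<le> C1 * X1 t + C1 * X2 t + (C2 * X3 t + C2 * X4 t)" for t
  proof (cases "0 < t")
    case True
    have "epowr (distfun M (\<lambda>x. f x + g x) t * ennreal (t powr p)) (q/p) * (ennreal (1/t) * indicator {0<..} t)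
      \<le> (C1 * (epowr (distfun M f ((1-\<epsilon>)*t) * ennreal (t powr p)) (q/p)
          + epowr (distfun M g ((1-\<epsilon>)*t) * ennreal (t powr p)) (q/p))
      + C2 * (indicator {..<\<delta>} t * epowr (distfun M f (\<epsilon>*t) * ennreal (t powr p)) (q/p)
          + indicator {\<delta>..} t * (ennreal (\<epsilon> powr (-p1*(q/p)) * t powr ((p-p1)*(q/p))) * EI)))
        * (ennreal (1/t) * indicator {0<..} t)"
      unfolding C1_def C2_def EI_def
      by (intro mult_right_mono pointwise_bound[OF assms(1,2) p e d True]) auto
    also have "\<dots> = C1 * X1 t + C1 * X2 t + (C2 * X3 t + C2 * X4 t)"
      unfolding X1_def X2_def X3_def X4_def by (simp add: algebra_simps)
    finally show ?thesis by (simp add: mult.assoc)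
  qed (simp add: X1_def X2_def X3_def X4_def)
  have "lorentz_pow M p q (\<lambda>x. f x + g x)
     \<le> ennreal q * (\<integral>\<^sup>+t. C1 * X1 t + C1 * X2 t + (C2 * X3 t + C2 * X4 t) \<partial>lborel)"
    unfolding lorentz_pow_def by (intro mult_left_mono nn_integral_mono pw) auto
  also have "(\<integral>\<^sup>+t. C1 * X1 t + C1 * X2 t + (C2 * X3 t + C2 * X4 t) \<partial>lborel)
     = (\<integral>\<^sup>+t. C1 * X1 t + C1 * X2 t \<partial>lborel) + (\<integral>\<^sup>+t. C2 * X3 t + C2 * X4 t \<partial>lborel)"
    by (rule nn_integral_add) measurable
  also have "(\<integral>\<^sup>+t. C1 * X1 t + C1 * X2 t \<partial>lborel) = (\<integral>\<^sup>+t. C1 * X1 t \<partial>lborel) + (\<integral>\<^sup>+t. C1 * X2 t \<partial>lborel)"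
    by (rule nn_integral_add) measurable
  also have "(\<integral>\<^sup>+t. C2 * X3 t + C2 * X4 t \<partial>lborel) = (\<integral>\<^sup>+t. C2 * X3 t \<partial>lborel) + (\<integral>\<^sup>+t. C2 * X4 t \<partial>lborel)"
    by (rule nn_integral_add) measurable
  also have "(\<integral>\<^sup>+t. C1 * X1 t \<partial>lborel) = C1 * integral\<^sup>N lborel X1"
    by (rule nn_integral_cmult) measurable
  also have "(\<integral>\<^sup>+t. C1 * X2 t \<partial>lborel) = C1 * integral\<^sup>N lborel X2"
    by (rule nn_integral_cmult) measurable
  also have "(\<integral>\<^sup>+t. C2 * X3 t \<partial>lborel) = C2 * integral\<^sup>N lborel X3"
    by (rule nn_integral_cmult) measurable
  also have "(\<integral>\<^sup>+t. C2 * X4 t \<partial>lborel) = C2 * integral\<^sup>N lborel X4"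
    by (rule nn_integral_cmult) measurable
  finally have L: "lorentz_pow M p q (\<lambda>x. f x + g x)
     \<le> C1 * (ennreal q * integral\<^sup>N lborel X1) + C1 * (ennreal q * integral\<^sup>N lborel X2)
       + C2 * ennreal q * integral\<^sup>N lborel X3 + C2 * ennreal q * integral\<^sup>N lborel X4"
    by (simp add: algebra_simps)
  have e1: "0 < 1 - \<epsilon>" using e by simp
  have I1: "ennreal q * integral\<^sup>N lborel X1 = ennreal ((1-\<epsilon>) powr (-q)) * lorentz_pow M p q f"
    unfolding X1_def using scale_psi1[OF assms(1) p(1) p(3) e1] .
  have I2: "ennreal q * integral\<^sup>N lborel X2 = ennreal ((1-\<epsilon>) powr (-q)) * lorentz_pow M p q g"
    unfolding X2_def using scale_psi1[OF assms(2) p(1) p(3) e1] .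
  have I3: "integral\<^sup>N lborel X3 = ennreal (\<epsilon> powr (-q)) * Tf M p q f (\<epsilon> * \<delta>)"
    unfolding X3_def using scale_psi2[OF assms(1) p(1) p(3) e(1)] .
  have "integral\<^sup>N lborel X4 = (\<integral>\<^sup>+t. (ennreal (\<epsilon> powr (-p1*(q/p))) * EI) * (ennreal (t powr ((p-p1)*(q/p) - 1)) * indicator {\<delta>..} t) \<partial>lborel)"
  proof (intro nn_integral_cong)
    fix t :: real
    show "X4 t = (ennreal (\<epsilon> powr (-p1*(q/p))) * EI) * (ennreal (t powr ((p-p1)*(q/p) - 1)) * indicator {\<delta>..} t)"
    proof (cases "\<delta> \<le> t")
      case True
      then have t: "0 < t" using d by simp
      have "t powr ((p-p1)*(q/p)) * (1/t) = t powr ((p-p1)*(q/p) - 1)"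
        using t by (simp add: powr_diff)
      then have "ennreal (t powr ((p-p1)*(q/p))) * ennreal (1/t) = ennreal (t powr ((p-p1)*(q/p) - 1))"
        using t by (simp flip: ennreal_mult)
      then show ?thesis using True t e
        by (simp add: X4_def ennreal_mult mult_ac) (metis mult.left_commute)
    qed (simp add: X4_def)
  qed
  also have "\<dots> = ennreal (\<epsilon> powr (-p1*(q/p))) * EI * Jd"
    unfolding Jd_def by (rule nn_integral_cmult) measurable
  finally have I4: "integral\<^sup>N lborel X4 = ennreal (\<epsilon> powr (-p1*(q/p))) * EI * Jd" .
  show ?thesis
    using L unfolding I1 I2 I3 I4 C1_def[symmetric] C2_def[symmetric] EI_def[symmetric] Jd_def[symmetric]
    by (simp add: algebra_simps)
qed



lemma Tf_tendsto:
  fixes f :: "'a \<Rightarrow> real"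
  assumes [measurable]: "f \<in> borel_measurable M" and p: "0 < p" "0 < q"
    and fin: "lorentz_pow M p q f < \<infinity>"
  shows "(\<lambda>n. Tf M p q f (1 / Suc n)) \<longlonglongrightarrow> 0"
proof -
  define F where "F n s = epowr (distfun M f s * ennreal (s powr p)) (q/p) * indicator {..<1 / real (Suc n)} s * ennreal (1/s) * indicator {0<..} s" for n s
  have [measurable]: "F n \<in> borel_measurable borel" for n unfolding F_def by measurable
  have dec: "decseq F"
  proof (rule decseq_SucI, rule le_funI)
    fix n s
    have "indicator {..<1 / real (Suc (Suc n))} s \<le> (indicator {..<1 / real (Suc n)} s :: ennreal)"
    proof -
      have "1 / real (Suc (Suc n)) \<le> 1 / real (Suc n)" by (intro divide_left_mono) auto
      then show ?thesis by (auto simp: indicator_def simp del: of_nat_Suc)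
    qed
    then show "F (Suc n) s \<le> F n s" unfolding F_def
      by (intro mult_right_mono mult_left_mono) auto
  qed
  have "integral\<^sup>N lborel (F 0) \<le> (\<integral>\<^sup>+s. epowr (distfun M f s * ennreal (s powr p)) (q/p) * ennreal (1/s) * indicator {0<..} s \<partial>lborel)"
  proof (intro nn_integral_mono)
    fix s :: real
    have "indicator {..<1 / real (Suc 0)} s \<le> (1::ennreal)" by (simp split: split_indicator)
    then show "F 0 s \<le> epowr (distfun M f s * ennreal (s powr p)) (q/p) * ennreal (1/s) * indicator {0<..} s"
      unfolding F_def by (metis mult.right_neutral mult_left_mono mult_right_mono zero_le)
  qed
  also have "\<dots> < \<infinity>"
  proof -
    have eq: "lorentz_pow M p q f = ennreal q * (\<integral>\<^sup>+s. epowr (distfun M f s * ennreal (s powr p)) (q/p) * ennreal (1/s) * indicator {0<..} s \<partial>lborel)"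
      unfolding lorentz_pow_def ..
    show ?thesis using fin p unfolding eq by (auto simp: ennreal_mult_less_top top.not_eq_extremum)
  qed
  finally have fin0: "integral\<^sup>N lborel (F 0) < \<infinity>" .
  have fin_i: "integral\<^sup>N lborel (F i) < \<infinity>" for i
  proof -
    have "integral\<^sup>N lborel (F i) \<le> integral\<^sup>N lborel (F 0)"
      using decseqD[OF dec, of 0 i] by (intro nn_integral_mono) (simp add: le_fun_def)
    then show ?thesis using fin0 by (rule le_less_trans)
  qed
  have "(\<integral>\<^sup>+s. (INF i. F i s) \<partial>lborel) = (INF i. integral\<^sup>N lborel (F i))"
    by (rule nn_integral_monotone_convergence_INF_decseq[OF dec, where i=0]) (use fin0 in simp_all)
  moreover have "(INF i. F i s) = 0" for s
  proof (cases "0 < s")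
    case True
    then obtain n where "1 / real (Suc n) < s" using reals_Archimedean[OF True] by (auto simp: inverse_eq_divide)
    then have "F n s = 0" by (simp add: F_def)
    then show ?thesis using INF_lower[of n UNIV "\<lambda>i. F i s"] by simp
  next
    case False
    then have "F 0 s = 0" by (simp add: F_def)
    then show ?thesis using INF_lower[of 0 UNIV "\<lambda>i. F i s"] by simp
  qed
  ultimately have "(INF i. integral\<^sup>N lborel (F i)) = 0" by simp
  moreover have "decseq (\<lambda>i. integral\<^sup>N lborel (F i))"
  proof (rule decseq_SucI)
    fix n show "integral\<^sup>N lborel (F (Suc n)) \<le> integral\<^sup>N lborel (F n)"
      using decseqD[OF dec, of n "Suc n"] by (intro nn_integral_mono) (simp add: le_fun_def)
  qed
  ultimately have "(\<lambda>i. integral\<^sup>N lborel (F i)) \<longlonglongrightarrow> 0"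
    using LIMSEQ_INF[of "\<lambda>i. integral\<^sup>N lborel (F i)"] by simp
  moreover have "Tf M p q f (1 / Suc n) = integral\<^sup>N lborel (F n)" for n
    unfolding Tf_def F_def by simp
  ultimately show ?thesis by simp
qed



theorem lemma5p4:
  fixes M :: "'a measure" and p p1 q :: real and A :: ennreal
    and f :: "'a \<Rightarrow> real" and g :: "nat \<Rightarrow> 'a \<Rightarrow> real"
  assumes "0 < p" "p < p1" "0 < q"
    and "in_Lorentz M p q f"
    and "\<And>j. in_Lorentz M p q (g j)"
    and "limsup (\<lambda>j. lorentz_norm M p q (g j)) \<le> A"
    and "(\<lambda>j. lp_norm M p1 (g j)) \<longlonglongrightarrow> 0"
  shows "limsup (\<lambda>j. lorentz_pow M p q (\<lambda>x. f x + g j x)) \<le> lorentz_pow M p q f + epowr A q"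
proof -
  have p: "0 < p" "p < p1" "0 < q" using assms(1-3) by auto
  have p1: "0 < p1" using p by simp
  have fm[measurable]: "f \<in> borel_measurable M" and Lf: "lorentz_pow M p q f < top"
    using assms(4) unfolding in_Lorentz_def by auto
  have gm[measurable]: "g j \<in> borel_measurable M" for j
    using assms(5) unfolding in_Lorentz_def by auto
  show ?thesis
  proof (cases "A = top")
    case True
    then show ?thesis by simp
  next
    case False
    then obtain a where a: "A = ennreal a" "0 \<le> a" by (cases A) auto
    have EA: "epowr A q = ennreal (a powr q)" using a by (simp add: epowr_ennreal)
    obtain x where x: "lorentz_pow M p q f = ennreal x" "0 \<le> x"
      using Lf by (cases "lorentz_pow M p q f") auto
    define I where "I j = (\<integral>\<^sup>+x. ennreal (\<bar>g j x\<bar> powr p1) \<partial>M)" for j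
    have "I j = epowr (lp_norm M p1 (g j)) p1" for j
      unfolding lp_norm_def I_def using p1 by (simp add: epowr_epowr)
    then have "I = (\<lambda>j. epowr (lp_norm M p1 (g j)) p1)" by auto
    then have I0: "I \<longlonglongrightarrow> 0"
      using epowr_tendsto_0[OF assms(7) p1] by simp
    have EI0: "(\<lambda>j. epowr (I j) (q/p)) \<longlonglongrightarrow> 0"
      using p by (intro epowr_tendsto_0[OF I0]) simp
    have Lg_eq: "lorentz_pow M p q (g j) = epowr (lorentz_norm M p q (g j)) q" for j
      unfolding lorentz_norm_def using p by (simp add: epowr_epowr)
    show ?thesis
    proof (rule ennreal_le_epsilon)
      fix e :: real assume e: "0 < e"
      define \<phi> where "\<phi> \<epsilon> = (1+\<epsilon>) powr (q/p) * (1-\<epsilon>) powr (-q) * (x + (a+\<epsilon>) powr q)" for \<epsilon> :: real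
      have ev_pos: "eventually (\<lambda>\<epsilon>. 0 < \<epsilon> \<and> \<epsilon> < 1) (at_right (0::real))"
        by (auto simp: eventually_at_right_field intro!: exI[of _ 1])
      have "(\<phi> \<longlongrightarrow> (1+0) powr (q/p) * (1-0) powr (-q) * (x + (a+0) powr q)) (at_right 0)"
        unfolding \<phi>_def using p ev_pos
        by (intro tendsto_intros) (auto elim!: eventually_mono)
      then have "(\<phi> \<longlongrightarrow> x + a powr q) (at_right 0)" by simp
      then have "eventually (\<lambda>\<epsilon>. \<phi> \<epsilon> < x + a powr q + e/3) (at_right 0)"
        using e by (intro order_tendstoD(2)) auto
      then have "eventually (\<lambda>\<epsilon>. (0 < \<epsilon> \<and> \<epsilon> < 1) \<and> \<phi> \<epsilon> < x + a powr q + e/3) (at_right 0)"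
        using ev_pos by eventually_elim auto
      then obtain b where b: "0 < b" "\<And>y. 0 < y \<Longrightarrow> y < b \<Longrightarrow> (0 < y \<and> y < 1) \<and> \<phi> y < x + a powr q + e/3"
        unfolding eventually_at_right_field by auto
      define \<epsilon> where "\<epsilon> = b / 2"
      have \<epsilon>: "0 < \<epsilon>" "\<epsilon> < 1" "\<phi> \<epsilon> < x + a powr q + e/3"
        using b(2)[of \<epsilon>] b(1) unfolding \<epsilon>_def by auto
      define K2 where "K2 = ennreal ((1+1/\<epsilon>) powr (q/p)) * ennreal q * ennreal (\<epsilon> powr (-q))"
      have K2: "K2 < top" unfolding K2_def by (simp add: ennreal_mult_less_top)
      have "(\<lambda>n. K2 * Tf M p q f (1 / Suc n)) \<longlonglongrightarrow> K2 * 0"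
        by (intro ennreal_tendsto_cmult K2 Tf_tendsto[OF fm p(1) p(3)]) (use Lf in simp)
      then have "eventually (\<lambda>n. K2 * Tf M p q f (1 / Suc n) < ennreal (e/3)) sequentially"
        using e by (intro order_tendstoD(2)) auto
      then obtain n where n: "K2 * Tf M p q f (1 / Suc n) < ennreal (e/3)"
        by (auto simp: eventually_sequentially)
      define \<delta> where "\<delta> = (1 / Suc n) / \<epsilon>"
      have \<delta>: "0 < \<delta>" "\<epsilon> * \<delta> = 1 / Suc n" using \<epsilon> unfolding \<delta>_def by auto
      define Jd where "Jd = (\<integral>\<^sup>+t. ennreal (t powr ((p-p1)*(q/p) - 1)) * indicator {\<delta>..} t \<partial>lborel)"
      have "(p-p1)*(q/p) < 0" using p by (intro mult_neg_pos) auto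
      then have Jd: "Jd < top" unfolding Jd_def using tail_integral_finite[OF _ \<delta>(1)] by simp
      define K3 where "K3 = ennreal ((1+1/\<epsilon>) powr (q/p)) * ennreal q * ennreal (\<epsilon> powr (-p1*(q/p))) * Jd"
      have K3: "K3 < top" unfolding K3_def using Jd by (simp add: ennreal_mult_less_top)
      have "(\<lambda>j. K3 * epowr (I j) (q/p)) \<longlonglongrightarrow> K3 * 0"
        by (intro ennreal_tendsto_cmult K3 EI0)
      then have ev3: "eventually (\<lambda>j. K3 * epowr (I j) (q/p) < ennreal (e/3)) sequentially"
        using e by (intro order_tendstoD(2)) auto
      have "limsup (\<lambda>j. lorentz_norm M p q (g j)) < ennreal (a + \<epsilon>)"
        using assms(6) a \<epsilon> by (auto intro: le_less_trans ennreal_lessI)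
      then have evn: "eventually (\<lambda>j. lorentz_norm M p q (g j) < ennreal (a + \<epsilon>)) sequentially"
        by (rule Limsup_lessD)
      have "eventually (\<lambda>j. lorentz_pow M p q (\<lambda>x. f x + g j x) \<le> lorentz_pow M p q f + epowr A q + ennreal e) sequentially"
        using ev3 evn
      proof eventually_elim
        case (elim j)
        have Lgj: "lorentz_pow M p q (g j) \<le> ennreal ((a + \<epsilon>) powr q)"
        proof -
          have "lorentz_pow M p q (g j) \<le> epowr (ennreal (a + \<epsilon>)) q"
            unfolding Lg_eq using elim(2) p by (intro epowr_mono) auto
          also have "\<dots> = ennreal ((a + \<epsilon>) powr q)" using a \<epsilon> by (intro epowr_ennreal) simp
          finally show ?thesis .
        qed
        have "lorentz_pow M p q (\<lambda>x. f x + g j x)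
          \<le> ennreal ((1+\<epsilon>) powr (q/p)) * ennreal ((1-\<epsilon>) powr (-q)) * (lorentz_pow M p q f + lorentz_pow M p q (g j))
            + K2 * Tf M p q f (\<epsilon> * \<delta>) + K3 * epowr (I j) (q/p)"
          using main_estimate[OF fm gm p \<epsilon>(1,2) \<delta>(1)] unfolding K2_def K3_def Jd_def I_def
          by (simp add: mult.assoc)
        also have "\<dots> \<le> ennreal ((1+\<epsilon>) powr (q/p)) * ennreal ((1-\<epsilon>) powr (-q)) * (ennreal x + ennreal ((a + \<epsilon>) powr q))
            + ennreal (e/3) + ennreal (e/3)"
        proof -
          have h1: "ennreal ((1+\<epsilon>) powr (q/p)) * ennreal ((1-\<epsilon>) powr (-q)) * (lorentz_pow M p q f + lorentz_pow M p q (g j))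
             \<le> ennreal ((1+\<epsilon>) powr (q/p)) * ennreal ((1-\<epsilon>) powr (-q)) * (ennreal x + ennreal ((a + \<epsilon>) powr q))"
            using Lgj unfolding x by (intro mult_left_mono add_mono) auto
          have h2: "K2 * Tf M p q f (\<epsilon> * \<delta>) \<le> ennreal (e/3)" using n unfolding \<delta>(2) by simp
          have h3: "K3 * epowr (I j) (q/p) \<le> ennreal (e/3)" using elim(1) by simp
          show ?thesis using add_mono[OF add_mono[OF h1 h2] h3] .
        qed
        also have "ennreal ((1+\<epsilon>) powr (q/p)) * ennreal ((1-\<epsilon>) powr (-q)) * (ennreal x + ennreal ((a + \<epsilon>) powr q))
            = ennreal (\<phi> \<epsilon>)"
          unfolding \<phi>_def using x(2) by (simp add: ennreal_mult ennreal_plus)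
        also have "ennreal (\<phi> \<epsilon>) + ennreal (e/3) + ennreal (e/3) \<le> ennreal (x + a powr q + e)"
        proof -
          have "0 \<le> \<phi> \<epsilon>" unfolding \<phi>_def using x(2) by simp
          then have "ennreal (\<phi> \<epsilon>) + ennreal (e/3) + ennreal (e/3) = ennreal (\<phi> \<epsilon> + e/3 + e/3)"
          proof -
            have "ennreal (\<phi> \<epsilon>) + ennreal (e/3) = ennreal (\<phi> \<epsilon> + e/3)"
              using e \<open>0 \<le> \<phi> \<epsilon>\<close> by (intro ennreal_plus[symmetric]) auto
            moreover have "ennreal (\<phi> \<epsilon> + e/3) + ennreal (e/3) = ennreal (\<phi> \<epsilon> + e/3 + e/3)"
              using e \<open>0 \<le> \<phi> \<epsilon>\<close> by (intro ennreal_plus[symmetric]) auto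
            ultimately show ?thesis by simp
          qed
          also have "\<dots> \<le> ennreal (x + a powr q + e)"
            using \<epsilon>(3) by (intro ennreal_leI) simp
          finally show ?thesis .
        qed
        also have "\<dots> = lorentz_pow M p q f + epowr A q + ennreal e"
          using x e unfolding EA by (simp add: ennreal_plus)
        finally show ?case .
      qed
      then show "limsup (\<lambda>j. lorentz_pow M p q (\<lambda>x. f x + g j x)) \<le> lorentz_pow M p q f + epowr A q + ennreal e"
        by (rule Limsup_bounded)
    qed
  qed
qed

end
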